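(* Let $G$ be a simple and nonabelian finite subgroup of $\mathrm{PGL}(3,\mathbb{C})$. Then there is a subgroup $\widetilde{G} \subset \mathrm{SL}(3,\mathbb{C})$ with $\pi(\widetilde{G}) = G$ such that every projective plane curve invariant under $G$ is defined by a homogeneous polynomial invariant under $\widetilde{G}$.
   Context: $\pi : \mathrm{SL}(3,\mathbb{C})\to\mathrm{PGL}(3,\mathbb{C})$ is the natural homomorphism, and $\mathrm{PGL}(3,\mathbb{C})$ acts on $\mathbb{P}^2$ via $[A]\cdot(a:b:c) = [A(a,b,c)^t]$. A projective plane curve is a nonzero effective divisor on $\mathbb{P}^2$; it is invariant under $G$ if $\sigma_* C = C$ for all $\sigma \in G$. For $A \in \mathrm{GL}(3,\mathbb{C})$ and a homogeneous polynomial $f$, set $f^A(\mathbf{x}) = f(A\mathbf{x})$ (with $\mathbf{x}$ the column vector $(x,y,z)^t$); $f$ is invariant under $\widetilde{G}$ if $f^A = f$ for all $A \in \widetilde{G}$. A curve $C$ is defined by $f$ if $C$ is the divisor of zeros of $f$. *)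

theory Defs
  imports "HOL-Analysis.Analysis" "HOL-Algebra.SimpleGroups"
begin

type_synonym cmat = "complex^3^3"
type_synonym cvec = "complex^3"

definition pgl_class :: "cmat \<Rightarrow> cmat set" where
  "pgl_class A = {(\<chi> i j. c * A $ i $ j) | c. c \<noteq> 0}"

definition PGL3 :: "cmat set monoid" where
  "PGL3 = \<lparr> carrier = pgl_class ` {A. invertible A},
            mult = (\<lambda>X Y. {A ** B | A B. A \<in> X \<and> B \<in> Y}),
            one = pgl_class (mat 1) \<rparr>"

definition SL3 :: "cmat monoid" where
  "SL3 = \<lparr> carrier = {A. det A = 1}, mult = (**), one = mat 1 \<rparr>"

definition pi3 :: "cmat \<Rightarrow> cmat set" where
  "pi3 A = pgl_class A"

text \<open>Homogeneous polynomials of degree d in x,y,z (as polynomial functions on C^3;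
  since C is infinite these correspond bijectively to polynomials).\<close>
definition hom_poly :: "nat \<Rightarrow> (cvec \<Rightarrow> complex) \<Rightarrow> bool" where
  "hom_poly d F \<longleftrightarrow> (\<exists>c :: nat \<Rightarrow> nat \<Rightarrow> nat \<Rightarrow> complex. \<forall>v.
     F v = (\<Sum>(i,j,k) \<in> {(i,j,k). i + j + k = d}. c i j k * v$1 ^ i * v$2 ^ j * v$3 ^ k))"

text \<open>The curve (effective divisor) defined by F: determined by F up to nonzero scalar.\<close>
definition curve_of :: "(cvec \<Rightarrow> complex) \<Rightarrow> (cvec \<Rightarrow> complex) set" where
  "curve_of F = {(\<lambda>v. c * F v) | c. c \<noteq> 0}"

definition plane_curve :: "(cvec \<Rightarrow> complex) set \<Rightarrow> bool" where
  "plane_curve C \<longleftrightarrow> (\<exists>d>0. \<exists>F. hom_poly d F \<and> F \<noteq> (\<lambda>_. 0) \<and> C = curve_of F)"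

definition defines_curve :: "(cvec \<Rightarrow> complex) \<Rightarrow> (cvec \<Rightarrow> complex) set \<Rightarrow> bool" where
  "defines_curve f C \<longleftrightarrow> (\<exists>d. hom_poly d f) \<and> C = curve_of f"

text \<open>Push-forward of a curve by the projective transformation [A]: the image of
  the zero locus of F under x |-> A x is the zero locus of F o A^{-1}.\<close>
definition push_curve :: "cmat \<Rightarrow> (cvec \<Rightarrow> complex) set \<Rightarrow> (cvec \<Rightarrow> complex) set" where
  "push_curve A C = (\<lambda>F v. F (matrix_inv A *v v)) ` C"

definition curve_invariant :: "cmat set set \<Rightarrow> (cvec \<Rightarrow> complex) set \<Rightarrow> bool" where
  "curve_invariant G C \<longleftrightarrow> (\<forall>X \<in> G. \<forall>A \<in> X. push_curve A C = C)"

definition poly_invariant :: "cmat set \<Rightarrow> (cvec \<Rightarrow> complex) \<Rightarrow> bool" where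
  "poly_invariant Gt f \<longleftrightarrow> (\<forall>A \<in> Gt. (\<lambda>v. f (A *v v)) = f)"

end

theory Submission imports Defs "HOL-Analysis.Complex_Transcendental" "HOL-Algebra.Generated_Groups" begin

definition sc :: "complex \<Rightarrow> cmat \<Rightarrow> cmat" where "sc c A = (\<chi> i j. c * A $ i $ j)"

lemma pgl_class_sc: "pgl_class A = {sc c A | c. c \<noteq> 0}"
  unfolding pgl_class_def sc_def by simp

lemma sc_mult: "sc c A ** sc d B = sc (c*d) (A ** B)"
  by (simp add: sc_def matrix_matrix_mult_def vec_eq_iff sum_distrib_left mult_ac)

lemma sc_sc: "sc c (sc d A) = sc (c*d) A"
  by (simp add: sc_def vec_eq_iff mult_ac)

lemma sc_1: "sc 1 A = A"
  by (simp add: sc_def vec_eq_iff)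

lemma det_sc: "det (sc c A) = c^3 * det A"
proof -
  have "sc c A = (\<chi> i. c *s A$i)" by (simp add: sc_def vec_eq_iff)
  then have "det (sc c A) = prod (\<lambda>i. c) (UNIV::3 set) * det ((\<chi> i. A$i)::cmat)"
    using det_rows_mul[of "\<lambda>i. c" "\<lambda>i. A$i"] by simp
  then show ?thesis by simp
qed

lemma self_in_pgl: "A \<in> pgl_class A"
  unfolding pgl_class_sc using sc_1 by (metis (mono_tags, lifting) mem_Collect_eq one_neq_zero)

lemma pgl_eq: "B \<in> pgl_class A \<Longrightarrow> pgl_class B = pgl_class A"
proof -
  assume "B \<in> pgl_class A"
  then obtain c where c: "c \<noteq> 0" "B = sc c A" unfolding pgl_class_sc by auto
  show ?thesis unfolding pgl_class_sc
  proof (intro subset_antisym subsetI)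
    fix X assume "X \<in> {sc d B |d. d \<noteq> 0}"
    then obtain d where "d \<noteq> 0" "X = sc d B" by auto
    then show "X \<in> {sc d A |d. d \<noteq> 0}" using c by (auto simp: sc_sc)
  next
    fix X assume "X \<in> {sc d A |d. d \<noteq> 0}"
    then obtain d where d: "d \<noteq> 0" "X = sc d A" by auto
    then have "X = sc (d / c) B" using c by (simp add: sc_sc)
    then show "X \<in> {sc d B |d. d \<noteq> 0}" using c d by auto
  qed
qed

lemma pgl_mult: "{X ** Y | X Y. X \<in> pgl_class A \<and> Y \<in> pgl_class B} = pgl_class (A ** B)"
proof (intro subset_antisym subsetI)
  fix Z assume "Z \<in> {X ** Y | X Y. X \<in> pgl_class A \<and> Y \<in> pgl_class B}"
  then obtain c d where "c \<noteq> 0" "d \<noteq> 0" "Z = sc c A ** sc d B" unfolding pgl_class_sc by auto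
  then show "Z \<in> pgl_class (A ** B)" unfolding pgl_class_sc by (auto simp: sc_mult)
next
  fix Z assume "Z \<in> pgl_class (A ** B)"
  then obtain c where "c \<noteq> 0" "Z = sc c A ** sc 1 B" unfolding pgl_class_sc by (auto simp: sc_mult)
  then show "Z \<in> {X ** Y | X Y. X \<in> pgl_class A \<and> Y \<in> pgl_class B}"
    unfolding pgl_class_sc by (smt (verit) mem_Collect_eq one_neq_zero)
qed

lemma minv: "invertible A \<Longrightarrow> A ** matrix_inv A = mat 1 \<and> matrix_inv A ** A = mat 1"
  unfolding matrix_inv_def invertible_def by (rule someI_ex)

lemma inv_minv: "invertible A \<Longrightarrow> invertible (matrix_inv A)"
  using minv unfolding invertible_def by blast

lemma PGL3_mult: "pgl_class A \<otimes>\<^bsub>PGL3\<^esub> pgl_class B = pgl_class (A ** B)"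
  by (simp add: PGL3_def pgl_mult)

lemma group_PGL3: "group PGL3"
proof (rule groupI)
  show "\<one>\<^bsub>PGL3\<^esub> \<in> carrier PGL3" by (auto simp: PGL3_def invertible_def)
next
  fix x y assume "x \<in> carrier PGL3" "y \<in> carrier PGL3"
  then show "x \<otimes>\<^bsub>PGL3\<^esub> y \<in> carrier PGL3"
    by (auto simp: PGL3_def pgl_mult invertible_mult)
next
  fix x y z assume "x \<in> carrier PGL3" "y \<in> carrier PGL3" "z \<in> carrier PGL3"
  then obtain A B C where "x = pgl_class A" "y = pgl_class B" "z = pgl_class C"
    by (auto simp: PGL3_def)
  then show "x \<otimes>\<^bsub>PGL3\<^esub> y \<otimes>\<^bsub>PGL3\<^esub> z = x \<otimes>\<^bsub>PGL3\<^esub> (y \<otimes>\<^bsub>PGL3\<^esub> z)"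
    by (simp add: PGL3_mult matrix_mul_assoc)
next
  fix x assume "x \<in> carrier PGL3"
  then obtain A where "x = pgl_class A" by (auto simp: PGL3_def)
  then show "\<one>\<^bsub>PGL3\<^esub> \<otimes>\<^bsub>PGL3\<^esub> x = x"
    using PGL3_mult[of "mat 1" A] by (simp add: PGL3_def)
next
  fix x assume "x \<in> carrier PGL3"
  then obtain A where A: "invertible A" "x = pgl_class A" by (auto simp: PGL3_def)
  show "\<exists>y\<in>carrier PGL3. y \<otimes>\<^bsub>PGL3\<^esub> x = \<one>\<^bsub>PGL3\<^esub>"
  proof (rule bexI[of _ "pgl_class (matrix_inv A)"])
    show "pgl_class (matrix_inv A) \<otimes>\<^bsub>PGL3\<^esub> x = \<one>\<^bsub>PGL3\<^esub>"
      using A minv[OF A(1)] by (simp add: PGL3_mult) (simp add: PGL3_def)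
    show "pgl_class (matrix_inv A) \<in> carrier PGL3" using inv_minv[OF A(1)] by (simp add: PGL3_def)
  qed
qed

lemma group_SL3: "group SL3"
proof (rule groupI)
  fix x assume "x \<in> carrier SL3"
  then have x: "det x = 1" by (simp add: SL3_def)
  then have "invertible x" using invertible_det_nz by force
  then have "matrix_inv x ** x = mat 1" using minv by blast
  then have "det (matrix_inv x) = 1" using x det_mul[of "matrix_inv x" x] by simp
  then show "\<exists>y\<in>carrier SL3. y \<otimes>\<^bsub>SL3\<^esub> x = \<one>\<^bsub>SL3\<^esub>"
    using \<open>matrix_inv x ** x = mat 1\<close> by (auto simp: SL3_def)
qed (auto simp: SL3_def det_mul matrix_mul_assoc)

lemma SL3_inv: "A \<in> carrier SL3 \<Longrightarrow> inv\<^bsub>SL3\<^esub> A = matrix_inv A"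
proof -
  assume a: "A \<in> carrier SL3"
  then have x: "det A = 1" by (simp add: SL3_def)
  then have "invertible A" using invertible_det_nz by force
  then have m: "matrix_inv A ** A = mat 1" "A ** matrix_inv A = mat 1" using minv by blast+
  then have "det (matrix_inv A) = 1" using x det_mul[of "matrix_inv A" A] by simp
  then show ?thesis using group.inv_equality[OF group_SL3, of "matrix_inv A" A] a m
    by (simp add: SL3_def)
qed

lemma hom_pi3: "group_hom SL3 PGL3 pi3"
proof -
  have "pi3 \<in> hom SL3 PGL3"
  proof (rule homI)
    fix x assume "x \<in> carrier SL3"
    then have "invertible x" using invertible_det_nz by (force simp: SL3_def)
    then show "pi3 x \<in> carrier PGL3" by (simp add: PGL3_def pi3_def)
  next
    fix x y assume "x \<in> carrier SL3" "y \<in> carrier SL3"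
    then show "pi3 (x \<otimes>\<^bsub>SL3\<^esub> y) = pi3 x \<otimes>\<^bsub>PGL3\<^esub> pi3 y"
      by (simp add: SL3_def pi3_def PGL3_mult)
  qed
  then show ?thesis using group_PGL3 group_SL3 by (simp add: group_hom_def group_hom_axioms_def)
qed


lemma (in group) comm_decomp:
  "x \<in> carrier G \<Longrightarrow> y \<in> carrier G \<Longrightarrow> x \<otimes> y = (x \<otimes> y \<otimes> inv x \<otimes> inv y) \<otimes> (y \<otimes> x)"
proof -
  assume x: "x \<in> carrier G" and y: "y \<in> carrier G"
  have "inv y \<otimes> (y \<otimes> x) = x" using x y by (simp add: m_assoc[symmetric])
  then show ?thesis using x y by (simp add: m_assoc)
qed

lemma simple_perfect:
  assumes sub: "subgroup G PGL3"
    and simp: "simple_group (PGL3\<lparr>carrier := G\<rparr>)"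
    and nc: "\<not> comm_group (PGL3\<lparr>carrier := G\<rparr>)"
  shows "derived PGL3 G = G"
proof -
  let ?H = "PGL3\<lparr>carrier := G\<rparr>"
  interpret H: simple_group ?H by (rule simp)
  have e: "derived PGL3 G = derived ?H (carrier ?H)"
    using group.derived_consistent[OF group_PGL3 _ sub, of G] by simp
  have "derived ?H (carrier ?H) \<lhd> ?H" by (rule H.derived_self_is_normal)
  then have "derived ?H (carrier ?H) = carrier ?H \<or> derived ?H (carrier ?H) = {\<one>\<^bsub>?H\<^esub>}"
    using H.no_real_normal_subgroup by blast
  moreover have "derived ?H (carrier ?H) \<noteq> {\<one>\<^bsub>?H\<^esub>}"
  proof
    assume D: "derived ?H (carrier ?H) = {\<one>\<^bsub>?H\<^esub>}"
    have "comm_group ?H"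
    proof (rule H.group_comm_groupI)
      fix x y assume x: "x \<in> carrier ?H" and y: "y \<in> carrier ?H"
      have "x \<otimes>\<^bsub>?H\<^esub> y \<otimes>\<^bsub>?H\<^esub> inv\<^bsub>?H\<^esub> x \<otimes>\<^bsub>?H\<^esub> inv\<^bsub>?H\<^esub> y \<in> derived ?H (carrier ?H)"
        unfolding derived_def using x y by (intro generate.incl) blast
      then have c: "x \<otimes>\<^bsub>?H\<^esub> y \<otimes>\<^bsub>?H\<^esub> inv\<^bsub>?H\<^esub> x \<otimes>\<^bsub>?H\<^esub> inv\<^bsub>?H\<^esub> y = \<one>\<^bsub>?H\<^esub>"
        using D by blast
      have eq: "x \<otimes>\<^bsub>?H\<^esub> y = (x \<otimes>\<^bsub>?H\<^esub> y \<otimes>\<^bsub>?H\<^esub> inv\<^bsub>?H\<^esub> x \<otimes>\<^bsub>?H\<^esub> inv\<^bsub>?H\<^esub> y) \<otimes>\<^bsub>?H\<^esub> (y \<otimes>\<^bsub>?H\<^esub> x)"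
        using x y by (rule H.comm_decomp)
      then have "x \<otimes>\<^bsub>?H\<^esub> y = \<one>\<^bsub>?H\<^esub> \<otimes>\<^bsub>?H\<^esub> (y \<otimes>\<^bsub>?H\<^esub> x)" using c by metis
      then show "x \<otimes>\<^bsub>?H\<^esub> y = y \<otimes>\<^bsub>?H\<^esub> x" using x y H.l_one H.m_closed by metis
    qed
    then show False using nc by simp
  qed
  ultimately show ?thesis using e by simp
qed

lemma lift_surj:
  assumes sub: "subgroup G PGL3"
  shows "pi3 ` {A \<in> carrier SL3. pi3 A \<in> G} = G"
proof (intro subset_antisym subsetI)
  fix X assume "X \<in> pi3 ` {A \<in> carrier SL3. pi3 A \<in> G}" then show "X \<in> G" by auto
next
  fix X assume X: "X \<in> G"
  then have "X \<in> carrier PGL3" using subgroup.subset[OF sub] by blast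
  then obtain A where A: "invertible A" "X = pgl_class A" by (auto simp: PGL3_def)
  then have dA: "det A \<noteq> 0" using invertible_det_nz by blast
  obtain w where w: "1 / det A = w ^ 3" using exists_complex_root[of 3 "1 / det A"] by auto
  then have w0: "w \<noteq> 0" using dA by auto
  have d: "det (sc w A) = 1" using w dA by (simp add: det_sc) (metis divide_self_if nonzero_eq_divide_eq)
  have "sc w A \<in> pgl_class A" using w0 unfolding pgl_class_sc by auto
  then have "pi3 (sc w A) = X" using A pgl_eq unfolding pi3_def by blast
  then show "X \<in> pi3 ` {A \<in> carrier SL3. pi3 A \<in> G}" using d X
    by (intro image_eqI[of _ _ "sc w A"]) (auto simp: SL3_def)
qed

theorem mainTheorem8:
  fixes G :: "cmat set set"
  assumes "subgroup G PGL3"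
    and "finite G"
    and "simple_group (PGL3\<lparr>carrier := G\<rparr>)"
    and "\<not> comm_group (PGL3\<lparr>carrier := G\<rparr>)"
  shows "\<exists>Gt. subgroup Gt SL3 \<and> pi3 ` Gt = G \<and>
           (\<forall>C. plane_curve C \<and> curve_invariant G C \<longrightarrow>
                (\<exists>f. defines_curve f C \<and> poly_invariant Gt f))"
proof -
  define P where "P = {A \<in> carrier SL3. pi3 A \<in> G}"
  have Psub: "P \<subseteq> carrier SL3" unfolding P_def by auto
  interpret SL: group SL3 by (rule group_SL3)
  interpret pi: group_hom SL3 PGL3 pi3 by (rule hom_pi3)
  have sg: "subgroup (derived SL3 P) SL3" by (rule SL.derived_is_subgroup[OF Psub])
  have img: "pi3 ` derived SL3 P = G"
    using pi.derived_img[OF Psub] lift_surj[OF assms(1)] simple_perfect[OF assms(1,3,4)]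
    unfolding P_def by simp
  have curves: "\<exists>f. defines_curve f C \<and> poly_invariant (derived SL3 P) f"
    if pc: "plane_curve C" and ci: "curve_invariant G C" for C
  proof -
    obtain d F where F: "hom_poly d F" "F \<noteq> (\<lambda>_. 0)" "C = curve_of F"
      using pc unfolding plane_curve_def by blast
    obtain w0 where w0: "F w0 \<noteq> 0" using F(2) by auto
    have key: "\<exists>c. c \<noteq> 0 \<and> (\<forall>w. F (matrix_inv a *v w) = c * F w) \<and> (\<forall>w. F (a *v w) = (1/c) * F w)"
      if a: "a \<in> P" for a
    proof -
      have aS: "det a = 1" "pi3 a \<in> G" using a unfolding P_def SL3_def by auto
      then have inv: "invertible a" using invertible_det_nz by force
      have "a \<in> pi3 a" unfolding pi3_def by (rule self_in_pgl)
      then have "push_curve a C = C" using ci aS unfolding curve_invariant_def by blast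
      moreover have "F \<in> C" unfolding F(3) curve_of_def by (rule CollectI, rule exI[of _ 1]) simp
      ultimately have "(\<lambda>v. F (matrix_inv a *v v)) \<in> curve_of F" unfolding push_curve_def F(3) by blast
      then obtain c where c: "c \<noteq> 0" "(\<lambda>v. F (matrix_inv a *v v)) = (\<lambda>v. c * F v)"
        unfolding curve_of_def by blast
      have c1: "\<forall>w. F (matrix_inv a *v w) = c * F w" using c(2) by metis
      have "\<forall>w. F (a *v w) = (1/c) * F w"
      proof
        fix w
        have "F w = F (matrix_inv a *v (a *v w))"
          using minv[OF inv] by (simp add: matrix_vector_mul_assoc)
        also have "\<dots> = c * F (a *v w)" using c1 by blast
        finally show "F (a *v w) = (1/c) * F w" using c(1) by (simp add: field_simps)
      qed
      then show ?thesis using c(1) c1 by blast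
    qed
    define K where "K = {A \<in> carrier SL3. (\<lambda>v. F (A *v v)) = F}"
    have Ksg: "subgroup K SL3"
    proof (rule SL.subgroupI)
      show "K \<subseteq> carrier SL3" unfolding K_def by auto
      have "mat 1 \<in> K" unfolding K_def by (auto simp: SL3_def)
      then show "K \<noteq> {}" by blast
    next
      fix a assume a: "a \<in> K"
      then have aS: "a \<in> carrier SL3" and fa: "\<And>v. F (a *v v) = F v" unfolding K_def by (auto dest: fun_cong)
      have inv: "invertible a" using aS invertible_det_nz by (force simp: SL3_def)
      have "(\<lambda>v. F (matrix_inv a *v v)) = F"
      proof
        fix v
        have "F (matrix_inv a *v v) = F (a *v (matrix_inv a *v v))" using fa by simp
        also have "\<dots> = F v" using minv[OF inv] by (simp add: matrix_vector_mul_assoc)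
        finally show "F (matrix_inv a *v v) = F v" .
      qed
      then show "inv\<^bsub>SL3\<^esub> a \<in> K" using SL3_inv[OF aS] SL.inv_closed[OF aS] unfolding K_def by simp
    next
      fix a b assume "a \<in> K" "b \<in> K"
      then show "a \<otimes>\<^bsub>SL3\<^esub> b \<in> K" unfolding K_def
        by (auto simp: SL3_def det_mul matrix_vector_mul_assoc[symmetric] fun_eq_iff)
    qed
    have "derived_set SL3 P \<subseteq> K"
    proof
      fix x assume "x \<in> derived_set SL3 P"
      then obtain a b where ab: "a \<in> P" "b \<in> P"
        "x = a \<otimes>\<^bsub>SL3\<^esub> b \<otimes>\<^bsub>SL3\<^esub> inv\<^bsub>SL3\<^esub> a \<otimes>\<^bsub>SL3\<^esub> inv\<^bsub>SL3\<^esub> b" by blast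
      have xS: "x \<in> carrier SL3" using ab Psub by auto
      have x: "x = a ** b ** matrix_inv a ** matrix_inv b"
      proof -
        have "a \<in> carrier SL3" "b \<in> carrier SL3" using ab Psub by auto
        then have "inv\<^bsub>SL3\<^esub> a = matrix_inv a" "inv\<^bsub>SL3\<^esub> b = matrix_inv b" using SL3_inv by auto
        then show ?thesis using ab(3) by (simp add: SL3_def)
      qed
      obtain ca where ca: "ca \<noteq> 0" "\<forall>w. F (matrix_inv a *v w) = ca * F w" "\<forall>w. F (a *v w) = (1/ca) * F w"
        using key[OF ab(1)] by blast
      obtain cb where cb: "cb \<noteq> 0" "\<forall>w. F (matrix_inv b *v w) = cb * F w" "\<forall>w. F (b *v w) = (1/cb) * F w"
        using key[OF ab(2)] by blast
      have "(\<lambda>v. F (x *v v)) = F"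
      proof
        fix v
        have "F (x *v v) = F (a *v (b *v (matrix_inv a *v (matrix_inv b *v v))))"
          by (simp add: x matrix_vector_mul_assoc matrix_mul_assoc)
        also have "\<dots> = F v" using ca cb by simp
        finally show "F (x *v v) = F v" .
      qed
      then show "x \<in> K" using xS unfolding K_def by simp
    qed
    then have "derived SL3 P \<subseteq> K"
      unfolding derived_def by (rule SL.generate_subgroup_incl[OF _ Ksg])
    then have "poly_invariant (derived SL3 P) F" unfolding poly_invariant_def K_def by auto
    moreover have "defines_curve F C" unfolding defines_curve_def using F by blast
    ultimately show ?thesis by blast
  qed
  show ?thesis using sg img curves by blast
qed

end
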